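(* Let $\{x_k\}$ be the random sequence generated by the SKM method. Define $\bar{x}_k = \frac{1}{k}\sum_{l=1}^{k} x_l$. Then for any $0 < \delta < 2$, $$\mathbb{E}[f(\bar{x}_k)] \leq \frac{d(x_0,P)^2}{2\delta k(2-\delta)}.$$
   Context: Linear feasibility problem $Ax \leq b$ with $A \in \mathbb{R}^{m\times n}$, $b \in \mathbb{R}^m$, assumed consistent, with rows $a_i^T$ normalized ($\|a_i\|=1$). $P = \{x : Ax \leq b\}$, $\mathcal{P}(x)$ the Euclidean projection onto $P$, $d(x,P) = \|x-\mathcal{P}(x)\|$. Sampling: at each iteration a set $\tau$ of $\beta$ rows is chosen uniformly at random among all $\binom{m}{\beta}$ subsets and $i^* = \arg\max_{i\in\tau}(a_i^Tx-b_i)^+$; $\mathbb{E}_{\mathbb{S}}$ denotes expectation over this sampling. $f(x) = \mathbb{E}_{\mathbb{S}}\big[\tfrac12|(a_{i^*}^Tx-b_{i^*})^+|^2\big]$. SKM method (Sampling Kaczmarz Motzkin): starting from $x_0$, at each iteration sample $\tau_k$, pick $i^*$ at $x_k$, and set $x_{k+1} = x_k - \delta(a_{i^*}^Tx_k-b_{i^*})^+a_{i^*}$. *)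

theory Defs
  imports "HOL-Analysis.Analysis" "HOL-Probability.Probability"
begin

definition pos :: "real \<Rightarrow> real" where "pos t = max t 0"

definition feas_set :: "nat \<Rightarrow> (nat \<Rightarrow> real^'n) \<Rightarrow> (nat \<Rightarrow> real) \<Rightarrow> (real^'n) set" where
  "feas_set m a b = {x. \<forall>i<m. a i \<bullet> x \<le> b i}"

definition samp :: "nat \<Rightarrow> nat \<Rightarrow> nat set pmf" where
  "samp m \<beta> = pmf_of_set {\<tau>. \<tau> \<subseteq> {..<m} \<and> card \<tau> = \<beta>}"

definition is_maxsel :: "(nat \<Rightarrow> real^'n) \<Rightarrow> (nat \<Rightarrow> real) \<Rightarrow> (real^'n \<Rightarrow> nat set \<Rightarrow> nat) \<Rightarrow> nat \<Rightarrow> nat \<Rightarrow> bool" where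
  "is_maxsel a b sel m \<beta> \<longleftrightarrow> (\<forall>x \<tau>. \<tau> \<subseteq> {..<m} \<and> card \<tau> = \<beta> \<longrightarrow>
      sel x \<tau> \<in> \<tau> \<and> (\<forall>j\<in>\<tau>. pos (a j \<bullet> x - b j) \<le> pos (a (sel x \<tau>) \<bullet> x - b (sel x \<tau>))))"

definition fobj :: "nat \<Rightarrow> nat \<Rightarrow> (nat \<Rightarrow> real^'n) \<Rightarrow> (nat \<Rightarrow> real) \<Rightarrow> (real^'n \<Rightarrow> nat set \<Rightarrow> nat) \<Rightarrow> real^'n \<Rightarrow> real" where
  "fobj m \<beta> a b sel x = measure_pmf.expectation (samp m \<beta>)
     (\<lambda>\<tau>. (1/2) * (pos (a (sel x \<tau>) \<bullet> x - b (sel x \<tau>)))^2)"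

definition skm_step :: "(nat \<Rightarrow> real^'n) \<Rightarrow> (nat \<Rightarrow> real) \<Rightarrow> (real^'n \<Rightarrow> nat set \<Rightarrow> nat) \<Rightarrow> real \<Rightarrow> real^'n \<Rightarrow> nat set \<Rightarrow> real^'n" where
  "skm_step a b sel \<delta> x \<tau> = x - (\<delta> * pos (a (sel x \<tau>) \<bullet> x - b (sel x \<tau>))) *\<^sub>R a (sel x \<tau>)"

fun skm_traj :: "nat \<Rightarrow> nat \<Rightarrow> (nat \<Rightarrow> real^'n) \<Rightarrow> (nat \<Rightarrow> real) \<Rightarrow> (real^'n \<Rightarrow> nat set \<Rightarrow> nat) \<Rightarrow> real \<Rightarrow> real^'n \<Rightarrow> nat \<Rightarrow> (real^'n) list pmf" where
  "skm_traj m \<beta> a b sel \<delta> x0 0 = return_pmf [x0]"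
| "skm_traj m \<beta> a b sel \<delta> x0 (Suc k) =
     bind_pmf (skm_traj m \<beta> a b sel \<delta> x0 k)
       (\<lambda>xs. map_pmf (\<lambda>\<tau>. xs @ [skm_step a b sel \<delta> (last xs) \<tau>]) (samp m \<beta>))"

definition avg_iter :: "nat \<Rightarrow> (real^'n) list \<Rightarrow> real^'n" where
  "avg_iter k xs = (1 / real k) *\<^sub>R (\<Sum>l=1..k. xs ! l)"

end

theory Submission imports Defs begin

lemma closed_feas: "closed (feas_set m a b)"
proof -
  have "feas_set m a b = (\<Inter>i\<in>{..<m}. {x. a i \<bullet> x \<le> b i})"
    unfolding feas_set_def by auto
  thus ?thesis by (auto intro!: closed_INT closed_halfspace_le)
qed

lemma samp_set:
  assumes "\<beta> \<le> m"
  shows "set_pmf (samp m \<beta>) = {\<tau>. \<tau> \<subseteq> {..<m} \<and> card \<tau> = \<beta>}"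
    and "finite (set_pmf (samp m \<beta>))"
proof -
  have fin: "finite {\<tau>. \<tau> \<subseteq> {..<m} \<and> card \<tau> = \<beta>}"
    by (rule finite_subset[of _ "Pow {..<m}"]) auto
  have "{..<\<beta>} \<in> {\<tau>. \<tau> \<subseteq> {..<m} \<and> card \<tau> = \<beta>}" using assms by auto
  hence ne: "{\<tau>. \<tau> \<subseteq> {..<m} \<and> card \<tau> = \<beta>} \<noteq> {}" by blast
  show "set_pmf (samp m \<beta>) = {\<tau>. \<tau> \<subseteq> {..<m} \<and> card \<tau> = \<beta>}"
    unfolding samp_def using fin ne by simp
  thus "finite (set_pmf (samp m \<beta>))" using fin by simp
qed

lemma exp_bind_fin:
  fixes h :: "'b \<Rightarrow> real"
  assumes "finite (set_pmf p)" "\<And>x. x \<in> set_pmf p \<Longrightarrow> finite (set_pmf (f x))"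
  shows "measure_pmf.expectation (p \<bind> f) h = measure_pmf.expectation p (\<lambda>x. measure_pmf.expectation (f x) h)"
  apply (subst pmf_expectation_bind[of "set_pmf p"])
  using assms apply auto
  apply (subst integral_measure_pmf[of "set_pmf p"])
  using assms by auto

lemma pos_sq: "pos t * t = (pos t)^2"
  unfolding pos_def by (auto simp: power2_eq_square max_def)

lemma step_ineq:
  fixes a :: "nat \<Rightarrow> real^'n"
  assumes "i < m" "norm (a i) = 1" "feas_set m a b \<noteq> {}" "0 \<le> \<delta>"
  shows "(infdist (x - (\<delta> * pos (a i \<bullet> x - b i)) *\<^sub>R a i) (feas_set m a b))^2
     \<le> (infdist x (feas_set m a b))^2 - \<delta> * (2 - \<delta>) * (pos (a i \<bullet> x - b i))^2"
proof -
  obtain p where p: "p \<in> feas_set m a b" "infdist x (feas_set m a b) = dist x p"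
    using infdist_attains_inf[OF closed_feas assms(3)] by blast
  define r where "r = pos (a i \<bullet> x - b i)"
  define y where "y = x - (\<delta> * r) *\<^sub>R a i"
  have r0: "r \<ge> 0" unfolding r_def pos_def by simp
  have aip: "a i \<bullet> p \<le> b i" using p(1) assms(1) unfolding feas_set_def by auto
  have rr: "r * (a i \<bullet> (x - p)) \<ge> r^2"
  proof -
    have "r * (a i \<bullet> x - b i) = r^2" unfolding r_def by (rule pos_sq)
    moreover have "r * (a i \<bullet> x - b i) \<le> r * (a i \<bullet> (x - p))"
      using r0 aip by (intro mult_left_mono) (auto simp: inner_diff_right)
    ultimately show ?thesis by simp
  qed
  have "(norm (y - p))^2 = (norm (x - p))^2 - 2 * (\<delta> * r) * (a i \<bullet> (x - p)) + (\<delta> * r)^2 * (norm (a i))^2"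
  proof -
    have "y - p = (x - p) - (\<delta> * r) *\<^sub>R a i" unfolding y_def by (simp add: algebra_simps)
    hence "(norm (y - p))^2 = ((x - p) - (\<delta> * r) *\<^sub>R a i) \<bullet> ((x - p) - (\<delta> * r) *\<^sub>R a i)"
      by (simp only: power2_norm_eq_inner)
    also have "... = (x - p) \<bullet> (x - p) - 2 * (\<delta> * r) * (a i \<bullet> (x - p)) + (\<delta> * r)^2 * (a i \<bullet> a i)"
      by (simp add: inner_diff_left inner_diff_right inner_commute power2_eq_square algebra_simps)
    finally show ?thesis by (simp add: power2_norm_eq_inner)
  qed
  also have "... = (norm (x - p))^2 - 2 * \<delta> * (r * (a i \<bullet> (x - p))) + \<delta>^2 * r^2"
    using assms(2) by (simp add: power_mult_distrib)
  finally have eq: "(norm (y - p))^2 = (norm (x - p))^2 - 2 * \<delta> * (r * (a i \<bullet> (x - p))) + \<delta>^2 * r^2" .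
  have "infdist y (feas_set m a b) \<le> dist y p" using p(1) by (rule infdist_le)
  hence "(infdist y (feas_set m a b))^2 \<le> (dist y p)^2"
    by (intro power_mono) (auto simp: infdist_nonneg)
  also have "... = (norm (y - p))^2" by (simp add: dist_norm)
  also have "... \<le> (norm (x - p))^2 - 2 * \<delta> * r^2 + \<delta>^2 * r^2"
    unfolding eq using rr assms(4) by (simp add: mult_left_mono)
  also have "... = (infdist x (feas_set m a b))^2 - \<delta> * (2 - \<delta>) * r^2"
    using p(2) by (simp add: dist_norm power2_eq_square algebra_simps)
  finally show ?thesis unfolding y_def r_def .
qed

lemma pos_nonneg: "0 \<le> pos t" unfolding pos_def by simp

lemma pos_sublin:
  assumes "0 \<le> u" "0 \<le> v"
  shows "pos (u * x + v * y) \<le> u * pos x + v * pos y"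
proof -
  have "u * x \<le> u * pos x" "v * y \<le> v * pos y"
    using assms by (auto intro!: mult_left_mono simp: pos_def)
  moreover have "0 \<le> u * pos x + v * pos y" using assms by (simp add: pos_nonneg)
  ultimately show ?thesis unfolding pos_def by simp
qed

lemma convex_possq: "convex_on UNIV (\<lambda>t. (pos t)^2)"
proof (rule convex_onI)
  fix t x y :: real assume t: "0 < t" "t < 1"
  define p q where "p = pos x" and "q = pos y"
  have "pos ((1 - t) * x + t * y) \<le> (1 - t) * p + t * q"
    unfolding p_def q_def using t by (intro pos_sublin) auto
  hence "(pos ((1 - t) * x + t * y))^2 \<le> ((1 - t) * p + t * q)^2"
    by (intro power_mono) (auto simp: pos_nonneg)
  also have "... \<le> (1 - t) * p^2 + t * q^2"
  proof -
    have "(1 - t) * p^2 + t * q^2 - ((1 - t) * p + t * q)^2 = t * (1 - t) * (p - q)^2"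
      by (simp add: power2_eq_square algebra_simps)
    moreover have "0 \<le> t * (1 - t) * (p - q)^2" using t by simp
    ultimately show ?thesis by linarith
  qed
  finally show "(pos ((1 - t) *\<^sub>R x + t *\<^sub>R y))^2 \<le> (1 - t) * (pos x)^2 + t * (pos y)^2"
    unfolding p_def q_def by simp
qed simp

context
  fixes a :: "nat \<Rightarrow> real^'n" and b :: "nat \<Rightarrow> real" and m \<beta> :: nat
    and sel :: "real^'n \<Rightarrow> nat set \<Rightarrow> nat" and \<delta> :: real and x0 :: "real^'n"
  assumes bm: "\<beta> \<le> m"
    and an: "\<forall>i<m. norm (a i) = 1"
    and ne: "feas_set m a b \<noteq> {}"
    and ms: "is_maxsel a b sel m \<beta>"
    and d0: "0 < \<delta>" and d2: "\<delta> < 2"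
begin

lemma sel_props:
  assumes "\<tau> \<in> set_pmf (samp m \<beta>)"
  shows "sel x \<tau> \<in> \<tau>" "sel x \<tau> < m"
    "\<And>j. j \<in> \<tau> \<Longrightarrow> pos (a j \<bullet> x - b j) \<le> pos (a (sel x \<tau>) \<bullet> x - b (sel x \<tau>))"
  using assms ms unfolding samp_set(1)[OF bm] is_maxsel_def by auto

lemma fin_samp: "finite (set_pmf (samp m \<beta>))" using samp_set(2)[OF bm] .

lemma fobj_nonneg: "0 \<le> fobj m \<beta> a b sel x"
  unfolding fobj_def by (intro integral_nonneg_AE) auto

lemma exp_step:
  "measure_pmf.expectation (samp m \<beta>) (\<lambda>\<tau>. (infdist (skm_step a b sel \<delta> x \<tau>) (feas_set m a b))^2)
     + 2 * \<delta> * (2 - \<delta>) * fobj m \<beta> a b sel x \<le> (infdist x (feas_set m a b))^2"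
proof -
  let ?D = "\<lambda>\<tau>. (infdist (skm_step a b sel \<delta> x \<tau>) (feas_set m a b))^2"
  let ?R = "\<lambda>\<tau>. (1/2) * (pos (a (sel x \<tau>) \<bullet> x - b (sel x \<tau>)))^2"
  have int: "integrable (measure_pmf (samp m \<beta>)) g" for g :: "nat set \<Rightarrow> real"
    by (rule integrable_measure_pmf_finite[OF fin_samp])
  have "measure_pmf.expectation (samp m \<beta>) ?D + 2 * \<delta> * (2 - \<delta>) * fobj m \<beta> a b sel x
     = measure_pmf.expectation (samp m \<beta>) (\<lambda>\<tau>. ?D \<tau> + 2 * \<delta> * (2 - \<delta>) * ?R \<tau>)"
    unfolding fobj_def by (simp add: int)
  also have "... \<le> measure_pmf.expectation (samp m \<beta>) (\<lambda>\<tau>. (infdist x (feas_set m a b))^2)"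
  proof (rule integral_mono_AE)
    show "AE \<tau> in measure_pmf (samp m \<beta>). ?D \<tau> + 2 * \<delta> * (2 - \<delta>) * ?R \<tau> \<le> (infdist x (feas_set m a b))^2"
    proof (rule AE_pmfI)
      fix \<tau> assume t: "\<tau> \<in> set_pmf (samp m \<beta>)"
      have "?D \<tau> \<le> (infdist x (feas_set m a b))^2 - \<delta> * (2 - \<delta>) * (pos (a (sel x \<tau>) \<bullet> x - b (sel x \<tau>)))^2"
        unfolding skm_step_def
        using step_ineq[of "sel x \<tau>" m a b \<delta> x] sel_props(2)[OF t] an ne d0 by auto
      thus "?D \<tau> + 2 * \<delta> * (2 - \<delta>) * ?R \<tau> \<le> (infdist x (feas_set m a b))^2" by simp
    qed
  qed (auto simp: int)
  also have "... = (infdist x (feas_set m a b))^2" by simp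
  finally show ?thesis .
qed

lemma fobj_bound: "2 * \<delta> * (2 - \<delta>) * fobj m \<beta> a b sel x \<le> (infdist x (feas_set m a b))^2"
proof -
  have "0 \<le> measure_pmf.expectation (samp m \<beta>) (\<lambda>\<tau>. (infdist (skm_step a b sel \<delta> x \<tau>) (feas_set m a b))^2)"
    by (intro integral_nonneg_AE) auto
  thus ?thesis using exp_step[of x] by linarith
qed

lemma traj_props:
  "finite (set_pmf (skm_traj m \<beta> a b sel \<delta> x0 k)) \<and>
   (\<forall>xs\<in>set_pmf (skm_traj m \<beta> a b sel \<delta> x0 k). length xs = Suc k \<and> xs ! 0 = x0)"
proof (induction k)
  case 0
  then show ?case by simp
next
  case (Suc k)
  then show ?case using fin_samp by (auto simp: nth_append)
qed

lemma invariant: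
  "measure_pmf.expectation (skm_traj m \<beta> a b sel \<delta> x0 k)
     (\<lambda>xs. (infdist (last xs) (feas_set m a b))^2
        + 2 * \<delta> * (2 - \<delta>) * (\<Sum>l\<in>{1..<k}. fobj m \<beta> a b sel (xs ! l)))
   \<le> (infdist x0 (feas_set m a b))^2"
proof (induction k)
  case 0
  then show ?case by simp
next
  case (Suc k)
  let ?c = "2 * \<delta> * (2 - \<delta>)"
  let ?f = "fobj m \<beta> a b sel"
  let ?d = "\<lambda>x. (infdist x (feas_set m a b))^2"
  let ?T = "skm_traj m \<beta> a b sel \<delta> x0 k"
  have fT: "finite (set_pmf ?T)" and lT: "\<And>xs. xs \<in> set_pmf ?T \<Longrightarrow> length xs = Suc k"
    using traj_props[of k] by auto
  have c0: "0 \<le> ?c" using d0 d2 by simp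
  have "measure_pmf.expectation (skm_traj m \<beta> a b sel \<delta> x0 (Suc k))
     (\<lambda>xs. ?d (last xs) + ?c * (\<Sum>l\<in>{1..<Suc k}. ?f (xs ! l)))
     = measure_pmf.expectation ?T (\<lambda>xs. measure_pmf.expectation (samp m \<beta>)
         (\<lambda>\<tau>. ?d (skm_step a b sel \<delta> (last xs) \<tau>) + ?c * (\<Sum>l\<in>{1..<Suc k}. ?f ((xs @ [skm_step a b sel \<delta> (last xs) \<tau>]) ! l))))"
    by (simp add: exp_bind_fin fT fin_samp)
  also have "... \<le> measure_pmf.expectation ?T (\<lambda>xs. ?d (last xs) + ?c * (\<Sum>l\<in>{1..<k}. ?f (xs ! l)))"
  proof (rule integral_mono_AE)
    show "AE xs in measure_pmf ?T. measure_pmf.expectation (samp m \<beta>)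
         (\<lambda>\<tau>. ?d (skm_step a b sel \<delta> (last xs) \<tau>) + ?c * (\<Sum>l\<in>{1..<Suc k}. ?f ((xs @ [skm_step a b sel \<delta> (last xs) \<tau>]) ! l)))
         \<le> ?d (last xs) + ?c * (\<Sum>l\<in>{1..<k}. ?f (xs ! l))"
    proof (rule AE_pmfI)
      fix xs assume xs: "xs \<in> set_pmf ?T"
      have len: "length xs = Suc k" using lT[OF xs] .
      have S1: "(\<Sum>l\<in>{1..<Suc k}. ?f ((xs @ [y]) ! l)) = (\<Sum>l\<in>{1..<Suc k}. ?f (xs ! l))" for y
        by (rule sum.cong) (auto simp: nth_append len)
      have S2: "(\<Sum>l\<in>{1..<Suc k}. ?f (xs ! l)) \<le> (\<Sum>l\<in>{1..<k}. ?f (xs ! l)) + ?f (last xs)"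
      proof (cases k)
        case 0 then show ?thesis by (simp add: fobj_nonneg)
      next
        case (Suc k')
        have "last xs = xs ! k" using len by (metis diff_Suc_1 last_conv_nth list.size(3) nat.distinct(1))
        then show ?thesis using Suc by simp
      qed
      have "measure_pmf.expectation (samp m \<beta>)
         (\<lambda>\<tau>. ?d (skm_step a b sel \<delta> (last xs) \<tau>) + ?c * (\<Sum>l\<in>{1..<Suc k}. ?f ((xs @ [skm_step a b sel \<delta> (last xs) \<tau>]) ! l)))
         = measure_pmf.expectation (samp m \<beta>) (\<lambda>\<tau>. ?d (skm_step a b sel \<delta> (last xs) \<tau>))
           + ?c * (\<Sum>l\<in>{1..<Suc k}. ?f (xs ! l))"
        unfolding S1 by (simp add: integrable_measure_pmf_finite[OF fin_samp])
      also have "... \<le> measure_pmf.expectation (samp m \<beta>) (\<lambda>\<tau>. ?d (skm_step a b sel \<delta> (last xs) \<tau>))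
           + ?c * ((\<Sum>l\<in>{1..<k}. ?f (xs ! l)) + ?f (last xs))"
        using S2 c0 by (simp add: mult_left_mono)
      also have "... \<le> ?d (last xs) + ?c * (\<Sum>l\<in>{1..<k}. ?f (xs ! l))"
        using exp_step[of "last xs"] by (simp add: algebra_simps)
      finally show "measure_pmf.expectation (samp m \<beta>)
         (\<lambda>\<tau>. ?d (skm_step a b sel \<delta> (last xs) \<tau>) + ?c * (\<Sum>l\<in>{1..<Suc k}. ?f ((xs @ [skm_step a b sel \<delta> (last xs) \<tau>]) ! l)))
         \<le> ?d (last xs) + ?c * (\<Sum>l\<in>{1..<k}. ?f (xs ! l))" .
    qed
  qed (auto intro: integrable_measure_pmf_finite[OF fT])
  also have "... \<le> ?d x0" using Suc.IH .
  finally show ?case .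
qed

lemma jensen:
  assumes k: "1 \<le> k"
  shows "real k * fobj m \<beta> a b sel (avg_iter k xs) \<le> (\<Sum>l=1..k. fobj m \<beta> a b sel (xs ! l))"
proof -
  let ?h = "\<lambda>\<tau> x. (1/2) * (pos (a (sel x \<tau>) \<bullet> x - b (sel x \<tau>)))^2"
  let ?v = "avg_iter k xs"
  have kpos: "0 < real k" using k by simp
  have pw: "?h \<tau> ?v \<le> (1 / real k) * (\<Sum>l=1..k. ?h \<tau> (xs ! l))" if t: "\<tau> \<in> set_pmf (samp m \<beta>)" for \<tau>
  proof -
    define j where "j = sel ?v \<tau>"
    have jt: "j \<in> \<tau>" unfolding j_def by (rule sel_props(1)[OF t])
    have lin: "a j \<bullet> ?v - b j = (\<Sum>l\<in>{1..k}. (1 / real k) *\<^sub>R (a j \<bullet> (xs ! l) - b j))"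
    proof -
      have "(\<Sum>l\<in>{1..k}. (1 / real k) *\<^sub>R (a j \<bullet> (xs ! l) - b j))
          = (1 / real k) * (\<Sum>l\<in>{1..k}. a j \<bullet> (xs ! l)) - (1 / real k) * (real k * b j)"
        by (simp add: sum_distrib_left sum_subtractf right_diff_distrib)
      also have "... = a j \<bullet> ?v - b j"
        using kpos unfolding avg_iter_def by (simp add: inner_sum_right)
      finally show ?thesis by simp
    qed
    have "(pos (a j \<bullet> ?v - b j))^2 \<le> (\<Sum>l\<in>{1..k}. (1 / real k) * (pos (a j \<bullet> (xs ! l) - b j))^2)"
      unfolding lin
      by (rule convex_on_sum[OF _ _ convex_possq]) (use k in auto)
    also have "... \<le> (\<Sum>l\<in>{1..k}. (1 / real k) * (pos (a (sel (xs ! l) \<tau>) \<bullet> (xs ! l) - b (sel (xs ! l) \<tau>)))^2)"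
      by (intro sum_mono mult_left_mono power_mono sel_props(3)[OF t jt]) (auto simp: pos_nonneg)
    finally have "(pos (a j \<bullet> ?v - b j))^2 \<le> (1 / real k) * (\<Sum>l\<in>{1..k}. (pos (a (sel (xs ! l) \<tau>) \<bullet> (xs ! l) - b (sel (xs ! l) \<tau>)))^2)"
      by (simp add: sum_distrib_left)
    moreover have "(\<Sum>l=1..k. ?h \<tau> (xs ! l)) = (1/2) * (\<Sum>l\<in>{1..k}. (pos (a (sel (xs ! l) \<tau>) \<bullet> (xs ! l) - b (sel (xs ! l) \<tau>)))^2)"
      by (simp add: sum_distrib_left)
    ultimately show ?thesis unfolding j_def by simp
  qed
  have "fobj m \<beta> a b sel ?v \<le> measure_pmf.expectation (samp m \<beta>) (\<lambda>\<tau>. (1 / real k) * (\<Sum>l=1..k. ?h \<tau> (xs ! l)))"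
    unfolding fobj_def
  proof (rule integral_mono_AE)
    show "AE \<tau> in measure_pmf (samp m \<beta>). ?h \<tau> ?v \<le> (1 / real k) * (\<Sum>l=1..k. ?h \<tau> (xs ! l))"
      by (rule AE_pmfI) (rule pw)
  qed (auto intro!: integrable_measure_pmf_finite[OF fin_samp])
  also have "... = (1 / real k) * (\<Sum>l=1..k. fobj m \<beta> a b sel (xs ! l))"
    unfolding fobj_def
    by (simp add: integrable_measure_pmf_finite[OF fin_samp] integral_sum)
  finally show ?thesis using kpos by (simp add: field_simps)
qed

lemma final:
  assumes k: "1 \<le> k"
  shows "measure_pmf.expectation (skm_traj m \<beta> a b sel \<delta> x0 k)
           (\<lambda>xs. fobj m \<beta> a b sel (avg_iter k xs))
         \<le> (infdist x0 (feas_set m a b))^2 / (2 * \<delta> * real k * (2 - \<delta>))"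
proof -
  let ?c = "2 * \<delta> * (2 - \<delta>)"
  let ?f = "fobj m \<beta> a b sel"
  let ?d = "\<lambda>x. (infdist x (feas_set m a b))^2"
  let ?T = "skm_traj m \<beta> a b sel \<delta> x0 k"
  have fT: "finite (set_pmf ?T)" and lT: "\<And>xs. xs \<in> set_pmf ?T \<Longrightarrow> length xs = Suc k"
    using traj_props[of k] by auto
  have c0: "0 < ?c" using d0 d2 by simp
  have kpos: "0 < real k" using k by simp
  have "?c * real k * measure_pmf.expectation ?T (\<lambda>xs. ?f (avg_iter k xs))
      = measure_pmf.expectation ?T (\<lambda>xs. ?c * (real k * ?f (avg_iter k xs)))"
    by simp
  also have "... \<le> measure_pmf.expectation ?T (\<lambda>xs. ?d (last xs) + ?c * (\<Sum>l\<in>{1..<k}. ?f (xs ! l)))"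
  proof (rule integral_mono_AE)
    show "AE xs in measure_pmf ?T. ?c * (real k * ?f (avg_iter k xs)) \<le> ?d (last xs) + ?c * (\<Sum>l\<in>{1..<k}. ?f (xs ! l))"
    proof (rule AE_pmfI)
      fix xs assume xs: "xs \<in> set_pmf ?T"
      have len: "length xs = Suc k" using lT[OF xs] .
      have lst: "last xs = xs ! k" using len by (metis diff_Suc_1 last_conv_nth list.size(3) nat.distinct(1))
      have split: "(\<Sum>l=1..k. ?f (xs ! l)) = (\<Sum>l\<in>{1..<k}. ?f (xs ! l)) + ?f (xs ! k)"
        using k by (metis Suc_le_eq atLeastLessThanSuc_atLeastAtMost sum.atLeastLessThan_Suc)
      have "?c * (real k * ?f (avg_iter k xs)) \<le> ?c * (\<Sum>l=1..k. ?f (xs ! l))"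
        using jensen[OF k, of xs] c0 by (simp add: mult_left_mono)
      also have "... = ?c * (\<Sum>l\<in>{1..<k}. ?f (xs ! l)) + ?c * ?f (last xs)"
        unfolding split lst by (simp add: algebra_simps)
      also have "... \<le> ?c * (\<Sum>l\<in>{1..<k}. ?f (xs ! l)) + ?d (last xs)"
        using fobj_bound[of "last xs"] by simp
      finally show "?c * (real k * ?f (avg_iter k xs)) \<le> ?d (last xs) + ?c * (\<Sum>l\<in>{1..<k}. ?f (xs ! l))"
        by simp
    qed
  qed (auto intro: integrable_measure_pmf_finite[OF fT])
  also have "... \<le> ?d x0" by (rule invariant)
  finally have "?c * real k * measure_pmf.expectation ?T (\<lambda>xs. ?f (avg_iter k xs)) \<le> ?d x0" .
  moreover have "0 < ?c * real k" using c0 kpos by simp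
  ultimately have "measure_pmf.expectation ?T (\<lambda>xs. ?f (avg_iter k xs)) \<le> ?d x0 / (?c * real k)"
    by (simp add: pos_le_divide_eq mult.commute)
  also have "... = ?d x0 / (2 * \<delta> * real k * (2 - \<delta>))" by (simp add: algebra_simps)
  finally show ?thesis .
qed

end

theorem corollary2:
  fixes a :: "nat \<Rightarrow> real^'n" and b :: "nat \<Rightarrow> real" and m \<beta> k :: nat
    and sel :: "real^'n \<Rightarrow> nat set \<Rightarrow> nat" and \<delta> :: real and x0 :: "real^'n"
  assumes "1 \<le> \<beta>" and "\<beta> \<le> m"
    and "\<forall>i<m. norm (a i) = 1"
    and "feas_set m a b \<noteq> {}"
    and "is_maxsel a b sel m \<beta>"
    and "0 < \<delta>" and "\<delta> < 2"
    and "1 \<le> k"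
  shows "measure_pmf.expectation (skm_traj m \<beta> a b sel \<delta> x0 k)
           (\<lambda>xs. fobj m \<beta> a b sel (avg_iter k xs))
         \<le> (infdist x0 (feas_set m a b))^2 / (2 * \<delta> * real k * (2 - \<delta>))"
  using final[OF assms(2-7) assms(8)] .

end
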